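(* Let $X$ be a real Banach space and let $(x_n,f_n)\in S_X\times S_{X^*}$, $n\in\mathbb{N}$, satisfy $f_n(x_n)=1$ for each $n$. Let $(y,g)\in S_X\times S_{X^*}$ satisfy $g(y)=1$, where $y$ is a point of Gâteaux smoothness of the norm. For each $k\in\mathbb{N}$ let $(c_n^{(k)})_n$ be a finitely supported sequence of non-negative reals with $\sum_n c_n^{(k)}=1$, such that (i) $\sum_n c_n^{(k)}x_n\to y$ weakly as $k\to\infty$, and (ii) $\sum_n c_n^{(k)}f_n(y)\to 1$ as $k\to\infty$. Then $P_k:=\sum_n c_n^{(k)} f_n\otimes x_n\to g\otimes y$ in the weak operator topology as $k\to\infty$, and there exist finitely supported non-negative sequences $(d_n^{(l)})_n$ with $\sum_n d_n^{(l)}=1$ ($l\in\mathbb{N}$) such that $S_l:=\sum_n d_n^{(l)}f_n\otimes x_n\to g\otimes y$ in the strong operator topology as $l\to\infty$. Moreover, if each $(x_n,f_n)$ is a Flinn pair, then $(y,g)$ is a Flinn pair.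
   Context: For $f\in X^*$ and $x\in X$, $f\otimes x: X\to X$ is the operator $v\mapsto f(v)x$. A pair $(x,f)\in S_X\times X^*$ is a Flinn pair if $\|I-f\otimes x\|=1$, where $I$ is the identity operator on $X$. WOT: $T_k\to T$ iff $\varphi(T_kv)\to\varphi(Tv)$ for all $v\in X,\varphi\in X^*$; SOT: $T_kv\to Tv$ in norm for all $v\in X$. *)

theory Defs
  imports "HOL-Analysis.Analysis"
begin

definition rank_one :: "('a::real_normed_vector \<Rightarrow>\<^sub>L real) \<Rightarrow> 'a \<Rightarrow> ('a \<Rightarrow>\<^sub>L 'a)" where
  "rank_one f x = blinfun_scaleR_left x o\<^sub>L f"

definition flinn_pair :: "'a::real_normed_vector \<Rightarrow> ('a \<Rightarrow>\<^sub>L real) \<Rightarrow> bool" where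
  "flinn_pair x f \<longleftrightarrow> norm x = 1 \<and> norm (id_blinfun - rank_one f x) = 1"

definition gateaux_smooth_point :: "'a::real_normed_vector \<Rightarrow> bool" where
  "gateaux_smooth_point y \<longleftrightarrow>
     (\<exists>D :: 'a \<Rightarrow>\<^sub>L real. \<forall>h. ((\<lambda>t. (norm (y + t *\<^sub>R h) - norm y) / t) \<longlongrightarrow> D h) (at 0))"

definition weak_conv :: "(nat \<Rightarrow> 'a::real_normed_vector) \<Rightarrow> 'a \<Rightarrow> bool" where
  "weak_conv z y \<longleftrightarrow> (\<forall>\<phi> :: 'a \<Rightarrow>\<^sub>L real. (\<lambda>k. \<phi> (z k)) \<longlonglongrightarrow> \<phi> y)"

definition wot_conv :: "(nat \<Rightarrow> ('a::real_normed_vector \<Rightarrow>\<^sub>L 'a)) \<Rightarrow> ('a \<Rightarrow>\<^sub>L 'a) \<Rightarrow> bool" where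
  "wot_conv T S \<longleftrightarrow> (\<forall>v. \<forall>\<phi> :: 'a \<Rightarrow>\<^sub>L real. (\<lambda>k. \<phi> (T k v)) \<longlonglongrightarrow> \<phi> (S v))"

definition sot_conv :: "(nat \<Rightarrow> ('a::real_normed_vector \<Rightarrow>\<^sub>L 'a)) \<Rightarrow> ('a \<Rightarrow>\<^sub>L 'a) \<Rightarrow> bool" where
  "sot_conv T S \<longleftrightarrow> (\<forall>v. (\<lambda>k. T k v) \<longlonglongrightarrow> S v)"

definition fin_prob_seq :: "(nat \<Rightarrow> real) \<Rightarrow> bool" where
  "fin_prob_seq c \<longleftrightarrow> (\<forall>n. 0 \<le> c n) \<and> finite {n. c n \<noteq> 0} \<and> (\<Sum>n\<in>{n. c n \<noteq> 0}. c n) = 1"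

end

theory Submission
  imports Defs
begin


definition sublin :: "('a::real_vector \<Rightarrow> real) \<Rightarrow> bool" where
  "sublin q \<longleftrightarrow> (\<forall>x y. q (x+y) \<le> q x + q y) \<and> (\<forall>t x. t > 0 \<longrightarrow> q (t *\<^sub>R x) \<le> t * q x)"

lemma sublin_add: "sublin q \<Longrightarrow> q (x+y) \<le> q x + q y"
  unfolding sublin_def by blast

lemma sublin_scale_le: "sublin q \<Longrightarrow> t > 0 \<Longrightarrow> q (t *\<^sub>R x) \<le> t * q x"
  unfolding sublin_def by blast

lemma sublin_0: assumes "sublin q" shows "q 0 = 0"
proof -
  have a: "q 0 \<le> (1/2) * q 0" using sublin_scale_le[OF assms, of "1/2" 0] by simp
  have b: "q 0 \<le> 2 * q 0" using sublin_scale_le[OF assms, of 2 0] by simp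
  from a b show ?thesis by linarith
qed

lemma sublin_scale: assumes "sublin q" "t > 0" shows "q (t *\<^sub>R x) = t * q x"
proof -
  have "q x = q ((1/t) *\<^sub>R (t *\<^sub>R x))" using assms(2) by simp
  also have "\<dots> \<le> (1/t) * q (t *\<^sub>R x)" by (rule sublin_scale_le[OF assms(1)]) (use assms(2) in simp)
  finally have "t * q x \<le> q (t *\<^sub>R x)" using assms(2) by (simp add: field_simps)
  with sublin_scale_le[OF assms, of x] show ?thesis by linarith
qed

lemma sublin_neg: assumes "sublin q" shows "- q (-x) \<le> q x"
  using sublin_add[OF assms, of x "-x"] sublin_0[OF assms] by simp

lemma sublin_mod:
  assumes q: "sublin q" and c: "c \<le> q w"
  defines "r \<equiv> \<lambda>x. INF t\<in>{0::real..}. q (x + t *\<^sub>R w) - t * c"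
  shows "sublin r" "\<And>x. r x \<le> q x" "r (-w) \<le> - c"
proof -
  have lb: "- q (-x) \<le> q (x + t *\<^sub>R w) - t * c" if "t \<ge> 0" for x t
  proof -
    have "q (t *\<^sub>R w) \<le> q (x + t *\<^sub>R w) + q (-x)" using sublin_add[OF q, of "x + t *\<^sub>R w" "-x"] by simp
    moreover have "t * q w \<le> q (t *\<^sub>R w)"
    proof (cases "t = 0")
      case True then show ?thesis using sublin_0[OF q] by simp
    next
      case False then show ?thesis using sublin_scale[OF q, of t w] that by simp
    qed
    moreover have "t * c \<le> t * q w" using c that by (simp add: mult_left_mono)
    ultimately show ?thesis by linarith
  qed
  have bdd: "bdd_below ((\<lambda>t. q (x + t *\<^sub>R w) - t * c) ` {0..})" for x
    using lb[of _ x] unfolding bdd_below_def by auto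
  have low: "r x \<le> q (x + t *\<^sub>R w) - t * c" if "t \<ge> 0" for x t
    unfolding r_def by (rule cINF_lower[OF bdd]) (use that in auto)
  show "r x \<le> q x" for x using low[of 0 x] by simp
  show "r (-w) \<le> - c" using low[of 1 "-w"] sublin_0[OF q] by simp
  show "sublin r" unfolding sublin_def
  proof (intro conjI allI impI)
    fix x y
    have "r (x + y) - (q (y + t *\<^sub>R w) - t * c) \<le> r x" if t: "t \<ge> 0" for t
    proof -
      have "r (x + y) - (q (y + t *\<^sub>R w) - t * c) \<le> q (x + s *\<^sub>R w) - s * c" if s: "s \<ge> 0" for s
      proof -
        have "r (x+y) \<le> q ((x+y) + (s+t) *\<^sub>R w) - (s+t) * c" using low[of "s+t" "x+y"] s t by simp
        moreover have "q ((x+y) + (s+t) *\<^sub>R w) \<le> q (x + s *\<^sub>R w) + q (y + t *\<^sub>R w)"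
          using sublin_add[OF q, of "x + s *\<^sub>R w" "y + t *\<^sub>R w"] by (simp add: algebra_simps)
        ultimately show ?thesis by (simp add: algebra_simps)
      qed
      then show ?thesis unfolding r_def by (intro cINF_greatest) auto
    qed
    then have "r (x + y) - r x \<le> q (y + t *\<^sub>R w) - t * c" if "t \<ge> 0" for t using that by force
    then have "r (x + y) - r x \<le> r y" unfolding r_def by (intro cINF_greatest) auto
    then show "r (x + y) \<le> r x + r y" by simp
  next
    fix a :: real and x assume a: "a > 0"
    have "r (a *\<^sub>R x) / a \<le> q (x + t *\<^sub>R w) - t * c" if t: "t \<ge> 0" for t
    proof -
      have "r (a *\<^sub>R x) \<le> q (a *\<^sub>R x + (a*t) *\<^sub>R w) - (a*t) * c" using low[of "a*t"] a t by simp
      also have "q (a *\<^sub>R x + (a*t) *\<^sub>R w) = a * q (x + t *\<^sub>R w)"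
        using sublin_scale[OF q a, of "x + t *\<^sub>R w"] by (simp add: algebra_simps)
      finally show ?thesis using a by (simp add: field_simps)
    qed
    then have "r (a *\<^sub>R x) / a \<le> r x" unfolding r_def by (intro cINF_greatest) auto
    then show "r (a *\<^sub>R x) \<le> a * r x" using a by (simp add: field_simps)
  qed
qed

lemma sublin_minimal:
  assumes p: "sublin p"
  shows "\<exists>q. sublin q \<and> (\<forall>x. q x \<le> p x) \<and> (\<forall>r. sublin r \<and> (\<forall>x. r x \<le> q x) \<longrightarrow> (\<forall>x. r x = q x))"
proof -
  define S where "S = {q::'a\<Rightarrow>real. sublin q \<and> (\<forall>x. q x \<le> p x)}"
  define E where "E = (\<lambda>q::'a\<Rightarrow>real. {(x,s). q x \<le> s})"
  have Ele: "q2 x \<le> q1 x" if "E q1 \<subseteq> E q2" for q1 q2 x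
    using that unfolding E_def by auto
  have pS: "p \<in> S" using p unfolding S_def by auto
  have "\<forall>C\<in>chains (E ` S). \<exists>U\<in>E ` S. \<forall>X\<in>C. X \<subseteq> U"
  proof
    fix C assume C: "C \<in> chains (E ` S)"
    show "\<exists>U\<in>E ` S. \<forall>X\<in>C. X \<subseteq> U"
    proof (cases "C = {}")
      case True then show ?thesis using pS by auto
    next
      case False
      define Q where "Q = {q\<in>S. E q \<in> C}"
      have CQ: "\<exists>q\<in>Q. X = E q" if "X \<in> C" for X
        using chainsD2[OF C] that unfolding Q_def by auto
      then have Qne: "Q \<noteq> {}" using False by blast
      have Qtot: "(\<forall>x. q2 x \<le> q1 x) \<or> (\<forall>x. q1 x \<le> q2 x)" if "q1 \<in> Q" "q2 \<in> Q" for q1 q2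
        using chainsD[OF C, of "E q1" "E q2"] that Ele unfolding Q_def by blast
      have QS: "q \<in> S" if "q \<in> Q" for q using that unfolding Q_def by auto
      have bdd: "bdd_below ((\<lambda>q. q x) ` Q)" for x
      proof -
        have "- p (-x) \<le> q x" if "q \<in> Q" for q
        proof -
          have "sublin q" "p (-x) \<ge> q (-x)" using QS[OF that] unfolding S_def by auto
          then show ?thesis using sublin_neg[of q x] by linarith
        qed
        then show ?thesis unfolding bdd_below_def by auto
      qed
      define qs where "qs = (\<lambda>x. INF q\<in>Q. q x)"
      have low: "qs x \<le> q x" if "q \<in> Q" for q x
        unfolding qs_def by (rule cINF_lower[OF bdd that])
      have "sublin qs" unfolding sublin_def
      proof (intro conjI allI impI)
        fix x y
        have "qs (x+y) - q2 y \<le> q1 x" if "q1 \<in> Q" "q2 \<in> Q" for q1 q2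
        proof (cases "\<forall>x. q2 x \<le> q1 x")
          case True
          have "qs (x+y) \<le> q2 (x+y)" by (rule low[OF that(2)])
          also have "\<dots> \<le> q2 x + q2 y" using sublin_add QS[OF that(2)] unfolding S_def by blast
          finally show ?thesis using True by (smt (verit))
        next
          case False
          then have T: "\<forall>x. q1 x \<le> q2 x" using Qtot[OF that] by blast
          have "qs (x+y) \<le> q1 (x+y)" by (rule low[OF that(1)])
          also have "\<dots> \<le> q1 x + q1 y" using sublin_add QS[OF that(1)] unfolding S_def by blast
          finally show ?thesis using T by (smt (verit))
        qed
        then have "qs (x+y) - q2 y \<le> qs x" if "q2 \<in> Q" for q2
          using that unfolding qs_def by (intro cINF_greatest[OF Qne]) auto
        then have "qs (x+y) - qs x \<le> qs y"
          unfolding qs_def by (intro cINF_greatest[OF Qne]) (smt (verit))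
        then show "qs (x+y) \<le> qs x + qs y" by simp
      next
        fix t :: real and x assume t: "t > 0"
        have "qs (t *\<^sub>R x) / t \<le> q x" if "q \<in> Q" for q
        proof -
          have "qs (t *\<^sub>R x) \<le> q (t *\<^sub>R x)" by (rule low[OF that])
          also have "\<dots> \<le> t * q x" using sublin_scale_le QS[OF that] t unfolding S_def by blast
          finally show ?thesis using t by (simp add: field_simps)
        qed
        then have "qs (t *\<^sub>R x) / t \<le> qs x" unfolding qs_def by (intro cINF_greatest[OF Qne]) auto
        then show "qs (t *\<^sub>R x) \<le> t * qs x" using t by (simp add: field_simps)
      qed
      moreover have "qs x \<le> p x" for x
      proof -
        obtain q where "q \<in> Q" using Qne by auto
        then have "q x \<le> p x" "qs x \<le> q x" using low[of q x] QS unfolding S_def by auto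
        then show ?thesis by linarith
      qed
      ultimately have "qs \<in> S" unfolding S_def by auto
      moreover have "X \<subseteq> E qs" if XC: "X \<in> C" for X
      proof -
        obtain q where "q \<in> Q" "X = E q" using CQ[OF XC] by blast
        then show ?thesis using low unfolding E_def by (auto intro: order_trans)
      qed
      ultimately show ?thesis by blast
    qed
  qed
  from Zorn_Lemma2[OF this] obtain M where M: "M \<in> E ` S" "\<forall>X\<in>E ` S. M \<subseteq> X \<longrightarrow> X = M" by blast
  then obtain q where q: "q \<in> S" "M = E q" by auto
  have "\<forall>x. r x = q x" if r: "sublin r" "\<forall>x. r x \<le> q x" for r
  proof -
    have "r \<in> S" using r q(1) unfolding S_def by (auto intro: order_trans)
    moreover have "E q \<subseteq> E r" using r(2) unfolding E_def by (auto intro: order_trans)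
    ultimately have "E r = E q" using M q by auto
    then show ?thesis using Ele by (metis order_refl antisym)
  qed
  then show ?thesis using q(1) unfolding S_def by blast
qed

lemma sublin_linear_below:
  assumes p: "sublin p"
  shows "\<exists>\<phi>. linear \<phi> \<and> (\<forall>x. \<phi> x \<le> p x)"
proof -
  obtain q where q: "sublin q" "\<forall>x. q x \<le> p x" "\<forall>r. sublin r \<and> (\<forall>x. r x \<le> q x) \<longrightarrow> (\<forall>x. r x = q x)"
    using sublin_minimal[OF p] by blast
  have neg: "q (-u) = - q u" for u
  proof -
    define r where "r \<equiv> \<lambda>x. INF t\<in>{0::real..}. q (x + t *\<^sub>R (-u)) - t * q (-u)"
    have "sublin r" "\<And>x. r x \<le> q x" "r (- (-u)) \<le> - q (-u)"
      using sublin_mod[OF q(1), of "q (-u)" "-u"] unfolding r_def by auto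
    then have "r u = q u" using q(3) by auto
    then have "q u + q (-u) \<le> 0" using \<open>r (- (-u)) \<le> - q (-u)\<close> by simp
    moreover have "0 \<le> q u + q (-u)" using sublin_neg[OF q(1), of u] by simp
    ultimately show ?thesis by simp
  qed
  have add: "q (x + y) = q x + q y" for x y
  proof -
    have "q x \<le> q (x + y) + q (-y)" using sublin_add[OF q(1), of "x+y" "-y"] by simp
    then show ?thesis using sublin_add[OF q(1), of x y] neg[of y] by simp
  qed
  have sc: "q (t *\<^sub>R x) = t * q x" for t x
  proof (cases "t > 0")
    case True then show ?thesis using sublin_scale[OF q(1)] by blast
  next
    case False
    show ?thesis
    proof (cases "t = 0")
      case True then show ?thesis using sublin_0[OF q(1)] by simp
    next
      case False
      then have "-t > 0" using \<open>\<not> t > 0\<close> by simp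
      then have "q ((-t) *\<^sub>R x) = (-t) * q x" using sublin_scale[OF q(1)] by blast
      then show ?thesis using neg[of "(-t) *\<^sub>R x"] by simp
    qed
  qed
  have "linear q" by (rule linearI) (use add sc in auto)
  then show ?thesis using q(2) by blast
qed

lemma sublin_linear_norming:
  assumes p: "sublin p" and c: "c \<le> p w"
  shows "\<exists>\<phi>. linear \<phi> \<and> (\<forall>x. \<phi> x \<le> p x) \<and> c \<le> \<phi> w"
proof -
  define r where "r \<equiv> \<lambda>x. INF t\<in>{0::real..}. p (x + t *\<^sub>R w) - t * c"
  have r: "sublin r" "\<And>x. r x \<le> p x" "r (-w) \<le> - c"
    using sublin_mod[OF p c] unfolding r_def by auto
  obtain \<phi> where phi: "linear \<phi>" "\<forall>x. \<phi> x \<le> r x" using sublin_linear_below[OF r(1)] by blast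
  have "\<phi> (-w) = - \<phi> w" using linear_neg[OF phi(1)] by simp
  then have "c \<le> \<phi> w" using phi(2) r(3) by (smt (verit))
  then show ?thesis using phi r(2) by (meson order_trans)
qed

lemma sep0:
  fixes K :: "'a::real_normed_vector set"
  assumes K: "convex K" and k0: "k0 \<in> K" and d: "\<delta> > 0" and dist: "\<forall>k\<in>K. \<delta> \<le> dist y k"
  shows "\<exists>\<phi>. linear \<phi> \<and> (\<forall>x. \<phi> x \<le> norm x) \<and> (\<forall>k\<in>K. \<phi> k \<le> \<phi> y) \<and> \<delta> \<le> \<phi> (y - k0)"
proof -
  define I where "I = {0::real..} \<times> K"
  define h where "h = (\<lambda>x (l::real, k). norm (x - l *\<^sub>R (k - y)))"
  define p where "p = (\<lambda>x. INF z\<in>I. h x z)"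
  have Ine: "I \<noteq> {}" using k0 unfolding I_def by auto
  have bdd: "bdd_below (h x ` I)" for x unfolding h_def bdd_below_def by (auto intro!: exI[of _ 0])
  have low: "p x \<le> h x z" if "z \<in> I" for x z unfolding p_def by (rule cINF_lower[OF bdd that])
  have closed: "\<exists>z\<in>I. (case z of (l,k) \<Rightarrow> l *\<^sub>R (k - y)) = l1 *\<^sub>R (k1 - y) + l2 *\<^sub>R (k2 - y)"
    if "(l1,k1) \<in> I" "(l2,k2) \<in> I" for l1 k1 l2 k2
  proof (cases "l1 + l2 = 0")
    case True
    then have "l1 = 0" "l2 = 0" using that unfolding I_def by auto
    then show ?thesis using that by (intro bexI[of _ "(0,k1)"]) auto
  next
    case False
    then have pos: "l1 + l2 > 0" using that unfolding I_def by auto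
    define m where "m = (l1/(l1+l2)) *\<^sub>R k1 + (l2/(l1+l2)) *\<^sub>R k2"
    have "m \<in> K" unfolding m_def using K that pos unfolding I_def convex_def
      by (auto simp: add_divide_distrib[symmetric])
    moreover have "(l1 + l2) *\<^sub>R (m - y) = l1 *\<^sub>R (k1 - y) + l2 *\<^sub>R (k2 - y)"
    proof -
      have e: "(l1+l2) *\<^sub>R m = l1 *\<^sub>R k1 + l2 *\<^sub>R k2" using pos unfolding m_def by (simp add: scaleR_add_right)
      show ?thesis using e by (simp add: scaleR_diff_right algebra_simps)
    qed
    ultimately show ?thesis using pos by (intro bexI[of _ "(l1+l2, m)"]) (auto simp: I_def)
  qed
  have "sublin p" unfolding sublin_def
  proof (intro conjI allI impI)
    fix x1 x2
    have "p (x1 + x2) - h x2 z2 \<le> h x1 z1" if zI: "z1 \<in> I" "z2 \<in> I" for z1 z2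
    proof -
      obtain l1 k1 l2 k2 where z: "z1 = (l1,k1)" "z2 = (l2,k2)" by fastforce
      obtain z where z3: "z \<in> I" "(case z of (l,k) \<Rightarrow> l *\<^sub>R (k - y)) = l1 *\<^sub>R (k1 - y) + l2 *\<^sub>R (k2 - y)"
        using closed[of l1 k1 l2 k2] zI z by auto
      have "p (x1 + x2) \<le> h (x1 + x2) z" by (rule low[OF z3(1)])
      also have "h (x1 + x2) z = norm ((x1 - l1 *\<^sub>R (k1 - y)) + (x2 - l2 *\<^sub>R (k2 - y)))"
      proof -
        obtain a b where zab: "z = (a,b)" by (cases z)
        have eqab: "a *\<^sub>R (b - y) = l1 *\<^sub>R (k1 - y) + l2 *\<^sub>R (k2 - y)" using z3(2) unfolding zab case_prod_conv .
        have "h (x1 + x2) z = norm (x1 + x2 - (l1 *\<^sub>R (k1 - y) + l2 *\<^sub>R (k2 - y)))"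
          by (simp only: h_def zab case_prod_conv eqab)
        also have "x1 + x2 - (l1 *\<^sub>R (k1 - y) + l2 *\<^sub>R (k2 - y)) = (x1 - l1 *\<^sub>R (k1 - y)) + (x2 - l2 *\<^sub>R (k2 - y))"
          by (simp add: algebra_simps)
        finally show ?thesis .
      qed
      also have "\<dots> \<le> h x1 z1 + h x2 z2" unfolding z h_def by (simp add: norm_triangle_ineq)
      finally show ?thesis by simp
    qed
    then have "p (x1 + x2) - h x2 z2 \<le> p x1" if "z2 \<in> I" for z2
      using that unfolding p_def by (intro cINF_greatest[OF Ine]) auto
    then have "p (x1 + x2) - p x1 \<le> p x2" unfolding p_def by (intro cINF_greatest[OF Ine]) (smt (verit))
    then show "p (x1 + x2) \<le> p x1 + p x2" by simp
  next
    fix t :: real and x assume t: "t > 0"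
    have "p (t *\<^sub>R x) / t \<le> h x z" if "z \<in> I" for z
    proof -
      obtain l k where z: "z = (l,k)" by fastforce
      have "(t*l, k) \<in> I" using that t unfolding z I_def by auto
      then have "p (t *\<^sub>R x) \<le> h (t *\<^sub>R x) (t*l, k)" by (rule low)
      also have "h (t *\<^sub>R x) (t*l, k) = t * h x z"
      proof -
        have "t *\<^sub>R x - (t * l) *\<^sub>R (k - y) = t *\<^sub>R (x - l *\<^sub>R (k - y))" by (simp add: algebra_simps)
        then show ?thesis unfolding h_def z using t by simp
      qed
      finally show ?thesis using t by (simp add: field_simps)
    qed
    then have "p (t *\<^sub>R x) / t \<le> p x" unfolding p_def by (intro cINF_greatest[OF Ine]) auto
    then show "p (t *\<^sub>R x) \<le> t * p x" using t by (simp add: field_simps)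
  qed
  moreover have "\<delta> \<le> p (y - k0)" unfolding p_def
  proof (rule cINF_greatest[OF Ine])
    fix z assume z: "z \<in> I"
    obtain l k where zz: "z = (l,k)" by fastforce
    have l: "l \<ge> 0" "k \<in> K" using z unfolding zz I_def by auto
    define m where "m = (1/(1+l)) *\<^sub>R k0 + (l/(1+l)) *\<^sub>R k"
    have "1/(1+l) + l/(1+l) = 1" using l by (simp add: add_divide_distrib[symmetric])
    then have "m \<in> K" unfolding m_def using K l k0 unfolding convex_def by simp
    then have dm: "\<delta> \<le> norm (y - m)" using dist by (simp add: dist_norm)
    have "y - k0 - l *\<^sub>R (k - y) = (1 + l) *\<^sub>R (y - m)"
    proof -
      have e: "(1+l) *\<^sub>R m = k0 + l *\<^sub>R k" using l unfolding m_def by (simp add: scaleR_add_right)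
      show ?thesis using e by (simp add: scaleR_diff_right algebra_simps)
    qed
    then have "h (y - k0) z = (1 + l) * norm (y - m)" unfolding h_def zz using l by simp
    also have "\<dots> \<ge> norm (y - m)" using l by (simp add: mult_le_cancel_right1)
    finally show "\<delta> \<le> h (y - k0) z" using dm by simp
  qed
  ultimately obtain \<phi> where phi: "linear \<phi>" "\<forall>x. \<phi> x \<le> p x" "\<delta> \<le> \<phi> (y - k0)"
    using sublin_linear_norming by blast
  have "\<phi> x \<le> norm x" for x
  proof -
    have "(0, k0) \<in> I" using k0 unfolding I_def by auto
    then have "p x \<le> norm x" using low[of "(0,k0)" x] unfolding h_def by simp
    then show ?thesis using phi(2) by (meson order_trans)
  qed
  moreover have "\<phi> k \<le> \<phi> y" if k: "k \<in> K" for k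
  proof -
    have "(1, k) \<in> I" using k unfolding I_def by auto
    then have "p (k - y) \<le> 0" using low[of "(1,k)" "k - y"] unfolding h_def by simp
    then have "\<phi> (k - y) \<le> 0" using phi(2) by (meson order_trans)
    then show ?thesis using linear_diff[OF phi(1)] by simp
  qed
  ultimately show ?thesis using phi by blast
qed

lemma sep:
  fixes K :: "'a::real_normed_vector set"
  assumes K: "convex K" and k0: "k0 \<in> K" and d: "\<delta> > 0" and dist: "\<forall>k\<in>K. \<delta> \<le> dist y k"
  shows "\<exists>\<phi>::'a \<Rightarrow>\<^sub>L real. \<exists>\<gamma>>0. \<forall>k\<in>K. \<phi> k + \<gamma> \<le> \<phi> y"
proof -
  define K' where "K' = {k + v | k v. k \<in> K \<and> norm v \<le> \<delta>/2}"
  have cK': "convex K'"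
  proof -
    have eq: "K' = (\<Union>a\<in>K. \<Union>b\<in>cball 0 (\<delta>/2). {a + b})" unfolding K'_def by (auto simp: mem_cball_0; blast)
    show ?thesis unfolding eq by (rule convex_sums[OF K convex_cball])
  qed
  have k0': "k0 \<in> K'"
  proof -
    have "k0 = k0 + 0 \<and> k0 \<in> K \<and> norm (0::'a) \<le> \<delta>/2" using k0 d by simp
    then show ?thesis unfolding K'_def by blast
  qed
  have dist': "\<forall>k\<in>K'. \<delta>/2 \<le> dist y k"
  proof
    fix k' assume "k' \<in> K'"
    then obtain k v where kv: "k' = k + v" "k \<in> K" "norm v \<le> \<delta>/2" unfolding K'_def by auto
    have "\<delta> \<le> norm (y - k)" using dist kv by (simp add: dist_norm)
    also have "y - k = (y - k') + v" using kv by simp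
    also have "norm \<dots> \<le> norm (y - k') + norm v" by (rule norm_triangle_ineq)
    finally show "\<delta>/2 \<le> dist y k'" using kv by (simp add: dist_norm)
  qed
  obtain \<phi> where phi: "linear \<phi>" "\<forall>x. \<phi> x \<le> norm x" "\<forall>k\<in>K'. \<phi> k \<le> \<phi> y" "\<delta>/2 \<le> \<phi> (y - k0)"
    using sep0[OF cK' k0', of "\<delta>/2" y] d dist' by auto
  have bl: "bounded_linear \<phi>"
  proof (rule bounded_linear_intro[where K=1])
    show "\<phi> (x + y) = \<phi> x + \<phi> y" for x y using linear_add[OF phi(1)] by simp
    show "\<phi> (r *\<^sub>R x) = r *\<^sub>R \<phi> x" for r x using linear_scale[OF phi(1)] by simp
    show "norm (\<phi> x) \<le> norm x * 1" for x
      using phi(2)[rule_format, of x] phi(2)[rule_format, of "-x"] linear_neg[OF phi(1), of x] by auto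
  qed
  define R where "R = norm (y - k0)"
  have R: "R > 0" using dist k0 d unfolding R_def by (force simp: dist_norm)
  define \<gamma> where "\<gamma> = \<delta> * \<delta> / (4 * R)"
  have g: "\<gamma> > 0" unfolding \<gamma>_def using d R by simp
  have "\<phi> k + \<gamma> \<le> \<phi> y" if k: "k \<in> K" for k
  proof -
    define v where "v = (\<delta> / (2*R)) *\<^sub>R (y - k0)"
    have "norm v = (\<delta>/(2*R)) * R" unfolding v_def using R d by (simp add: R_def)
    then have nv: "norm v = \<delta>/2" using R by simp
    have "k + v \<in> K'" unfolding K'_def using k nv by auto
    then have "\<phi> (k + v) \<le> \<phi> y" using phi(3) by blast
    moreover have "\<phi> (k + v) = \<phi> k + (\<delta> / (2*R)) * \<phi> (y - k0)"
      unfolding v_def using linear_add[OF phi(1)] linear_scale[OF phi(1)] by simp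
    moreover have "\<gamma> \<le> (\<delta> / (2*R)) * \<phi> (y - k0)"
    proof -
      have "(\<delta> / (2*R)) * (\<delta>/2) \<le> (\<delta> / (2*R)) * \<phi> (y - k0)"
        using phi(4) d R by (intro mult_left_mono) auto
      then show ?thesis unfolding \<gamma>_def by (simp add: field_simps)
    qed
    ultimately show ?thesis by linarith
  qed
  then have "\<forall>k\<in>K. blinfun_apply (Blinfun \<phi>) k + \<gamma> \<le> blinfun_apply (Blinfun \<phi>) y"
    using bounded_linear_Blinfun_apply[OF bl] by simp
  then show ?thesis using g by blast
qed




lemma mazur:
  fixes z :: "nat \<Rightarrow> 'a::real_normed_vector"
  assumes w: "weak_conv z y" and e: "\<epsilon> > 0"
  shows "\<exists>m \<in> convex hull (z ` {N..}). dist y m < \<epsilon>"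
proof (rule ccontr)
  let ?H = "convex hull (z ` {N..})"
  assume a: "\<not> (\<exists>m \<in> ?H. dist y m < \<epsilon>)"
  have d: "\<forall>m \<in> ?H. \<epsilon> \<le> dist y m"
  proof
    fix m assume "m \<in> ?H"
    then show "\<epsilon> \<le> dist y m" using a by (meson not_le)
  qed
  have k0: "z N \<in> ?H" by (rule hull_inc) auto
  from sep[OF convex_convex_hull k0 e d]
  obtain \<phi> :: "'a \<Rightarrow>\<^sub>L real" and \<gamma> where g: "\<gamma> > 0" "\<forall>k\<in>?H. \<phi> k + \<gamma> \<le> \<phi> y"
    by blast
  have "(\<lambda>k. \<phi> (z k)) \<longlonglongrightarrow> \<phi> y" using w unfolding weak_conv_def by blast
  from this[unfolded LIMSEQ_iff, rule_format, OF g(1)]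
  obtain M where M: "\<forall>k\<ge>M. norm (\<phi> (z k) - \<phi> y) < \<gamma>" by blast
  have "z (max M N) \<in> ?H" by (rule hull_inc) auto
  then have "\<phi> (z (max M N)) + \<gamma> \<le> \<phi> y" using g(2) by blast
  moreover have "norm (\<phi> (z (max M N)) - \<phi> y) < \<gamma>" using M by simp
  ultimately show False by simp
qed
lemma sum_supp:
  fixes w :: "nat \<Rightarrow> 'b::real_vector"
  assumes "finite T" "{n. c n \<noteq> 0} \<subseteq> T"
  shows "(\<Sum>n\<in>{n. c n \<noteq> 0}. c n *\<^sub>R w n) = (\<Sum>n\<in>T. c n *\<^sub>R w n)"
  by (rule sum.mono_neutral_left) (use assms in auto)

lemma combo_sum:
  fixes c :: "'i \<Rightarrow> nat \<Rightarrow> real" and u :: "'i \<Rightarrow> real" and w :: "nat \<Rightarrow> 'b::real_vector"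
  assumes I: "finite I" and c: "\<forall>i\<in>I. fin_prob_seq (c i)"
  defines "d \<equiv> \<lambda>n. \<Sum>i\<in>I. u i * c i n"
  shows "(\<Sum>n\<in>{n. d n \<noteq> 0}. d n *\<^sub>R w n) = (\<Sum>i\<in>I. u i *\<^sub>R (\<Sum>n\<in>{n. c i n \<noteq> 0}. c i n *\<^sub>R w n))"
    and "finite {n. d n \<noteq> 0}"
proof -
  define T where "T = (\<Union>i\<in>I. {n. c i n \<noteq> 0})"
  have T: "finite T" unfolding T_def using I c unfolding fin_prob_seq_def by auto
  have cT: "{n. c i n \<noteq> 0} \<subseteq> T" if "i \<in> I" for i unfolding T_def using that by auto
  have dT: "{n. d n \<noteq> 0} \<subseteq> T"
  proof
    fix n assume n: "n \<in> {n. d n \<noteq> 0}"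
    show "n \<in> T"
    proof (rule ccontr)
      assume "n \<notin> T"
      then have "\<forall>i\<in>I. c i n = 0" unfolding T_def by auto
      then have "d n = 0" unfolding d_def by simp
      then show False using n by simp
    qed
  qed
  show "finite {n. d n \<noteq> 0}" using finite_subset[OF dT T] .
  have "(\<Sum>n\<in>{n. d n \<noteq> 0}. d n *\<^sub>R w n) = (\<Sum>n\<in>T. d n *\<^sub>R w n)" by (rule sum_supp[OF T dT])
  also have "\<dots> = (\<Sum>n\<in>T. \<Sum>i\<in>I. u i *\<^sub>R (c i n *\<^sub>R w n))"
    unfolding d_def by (simp add: scaleR_sum_left)
  also have "\<dots> = (\<Sum>i\<in>I. u i *\<^sub>R (\<Sum>n\<in>T. c i n *\<^sub>R w n))"
    by (subst sum.swap) (simp add: scaleR_sum_right)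
  also have "\<dots> = (\<Sum>i\<in>I. u i *\<^sub>R (\<Sum>n\<in>{n. c i n \<noteq> 0}. c i n *\<^sub>R w n))"
    by (rule sum.cong[OF refl]) (simp add: sum_supp[OF T cT])
  finally show "(\<Sum>n\<in>{n. d n \<noteq> 0}. d n *\<^sub>R w n) = (\<Sum>i\<in>I. u i *\<^sub>R (\<Sum>n\<in>{n. c i n \<noteq> 0}. c i n *\<^sub>R w n))" .
qed

lemma combo_prob:
  fixes c :: "'i \<Rightarrow> nat \<Rightarrow> real"
  assumes I: "finite I" and u: "\<forall>i\<in>I. 0 \<le> u i" "sum u I = 1" and c: "\<forall>i\<in>I. fin_prob_seq (c i)"
  shows "fin_prob_seq (\<lambda>n. \<Sum>i\<in>I. u i * c i n)"
proof -
  define d where "d \<equiv> \<lambda>n. \<Sum>i\<in>I. u i * c i n"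
  have "(\<Sum>n\<in>{n. d n \<noteq> 0}. d n) = (\<Sum>i\<in>I. u i * (\<Sum>n\<in>{n. c i n \<noteq> 0}. c i n))"
    using combo_sum(1)[OF I c, of u "\<lambda>_. 1::real"] unfolding d_def by simp
  also have "\<dots> = (\<Sum>i\<in>I. u i)" using c unfolding fin_prob_seq_def by simp
  finally have s1: "(\<Sum>n\<in>{n. d n \<noteq> 0}. d n) = 1" using u by simp
  have "0 \<le> d n" for n unfolding d_def using u c unfolding fin_prob_seq_def by (auto intro!: sum_nonneg)
  then show ?thesis using s1 combo_sum(2)[OF I c, of u] unfolding fin_prob_seq_def d_def by auto
qed

lemma apply_sum_rank_one:
  "blinfun_apply (\<Sum>n\<in>F. c n *\<^sub>R rank_one (f n) (x n)) v = (\<Sum>n\<in>F. (c n * f n v) *\<^sub>R x n)"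
  by (simp add: blinfun.sum_left rank_one_def scaleR_blinfun.rep_eq)

lemma blinfun_le_norm: "blinfun_apply (g :: 'a::real_normed_vector \<Rightarrow>\<^sub>L real) u \<le> norm g * norm u"
  using norm_blinfun[of g u] by simp

lemma smooth_deriv:
  fixes y :: "'a::real_normed_vector" and g :: "'a \<Rightarrow>\<^sub>L real"
  assumes smooth: "gateaux_smooth_point y" and yg: "norm y = 1" "norm g = 1" "g y = 1"
  shows "((\<lambda>t. (norm (y + t *\<^sub>R h) - 1) / t) \<longlongrightarrow> g h) (at_right 0)"
proof -
  obtain D :: "'a \<Rightarrow>\<^sub>L real" where D: "\<forall>h. ((\<lambda>t. (norm (y + t *\<^sub>R h) - norm y) / t) \<longlongrightarrow> D h) (at 0)"
    using smooth unfolding gateaux_smooth_point_def by blast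
  have L: "((\<lambda>t. (norm (y + t *\<^sub>R h) - 1) / t) \<longlongrightarrow> D h) (at (0::real))"
    using D yg(1) by simp
  then have R: "((\<lambda>t. (norm (y + t *\<^sub>R h) - 1) / t) \<longlongrightarrow> D h) (at_right 0)"
    and Lf: "((\<lambda>t. (norm (y + t *\<^sub>R h) - 1) / t) \<longlongrightarrow> D h) (at_left 0)"
    using filterlim_at_split by blast+
  have key: "g (y + t *\<^sub>R h) \<le> norm (y + t *\<^sub>R h)" for t
    using blinfun_le_norm[of g] yg(2) by simp
  have gapp: "g (y + t *\<^sub>R h) = 1 + t * g h" for t
    using yg(3) by (simp add: blinfun.add_right blinfun.scaleR_right)
  have ev1: "eventually (\<lambda>t. g h \<le> (norm (y + t *\<^sub>R h) - 1) / t) (at_right (0::real))"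
  proof -
    have "eventually (\<lambda>t. t > (0::real)) (at_right 0)" by (simp add: eventually_at_right_less)
    then show ?thesis
    proof (rule eventually_mono)
      fix t :: real assume t: "t > 0"
      have "t * g h \<le> norm (y + t *\<^sub>R h) - 1" using key[of t] gapp[of t] by simp
      then show "g h \<le> (norm (y + t *\<^sub>R h) - 1) / t" using t by (simp add: field_simps)
    qed
  qed
  have ev2: "eventually (\<lambda>t. (norm (y + t *\<^sub>R h) - 1) / t \<le> g h) (at_left (0::real))"
  proof -
    have "eventually (\<lambda>t. t < (0::real)) (at_left 0)" by (auto simp: eventually_at_left_field intro!: exI[of _ "-1"])
    then show ?thesis
    proof (rule eventually_mono)
      fix t :: real assume t: "t < 0"
      have "t * g h \<le> norm (y + t *\<^sub>R h) - 1" using key[of t] gapp[of t] by simp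
      then show "(norm (y + t *\<^sub>R h) - 1) / t \<le> g h" using t by (simp add: field_simps)
    qed
  qed
  have "g h \<le> D h" by (rule tendsto_le[OF trivial_limit_at_right_real R tendsto_const ev1])
  moreover have "D h \<le> g h" by (rule tendsto_le[OF trivial_limit_at_left_real tendsto_const Lf ev2])
  ultimately have "D h = g h" by simp
  then show ?thesis using R by simp
qed

definition errf :: "'a::real_normed_vector \<Rightarrow> ('a \<Rightarrow>\<^sub>L real) \<Rightarrow> 'a \<Rightarrow> real \<Rightarrow> real" where
  "errf y g v t = \<bar>(norm (y + t *\<^sub>R v) - 1) / t - g v\<bar> + \<bar>(norm (y + t *\<^sub>R (-v)) - 1) / t - g (-v)\<bar>"

lemma errf_lim:
  fixes y :: "'a::real_normed_vector" and g :: "'a \<Rightarrow>\<^sub>L real"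
  assumes smooth: "gateaux_smooth_point y" and yg: "norm y = 1" "norm g = 1" "g y = 1"
  shows "(errf y g v \<longlongrightarrow> 0) (at_right 0)"
proof -
  have a: "((\<lambda>t. (norm (y + t *\<^sub>R h) - 1) / t - g h) \<longlongrightarrow> 0) (at_right 0)" for h
    using tendsto_diff[OF smooth_deriv[OF assms, of h] tendsto_const[of "g h"]] by simp
  have "((\<lambda>t. \<bar>(norm (y + t *\<^sub>R v) - 1) / t - g v\<bar> + \<bar>(norm (y + t *\<^sub>R (-v)) - 1) / t - g (-v)\<bar>) \<longlongrightarrow> \<bar>0\<bar> + \<bar>0\<bar>) (at_right 0)"
    by (intro tendsto_add tendsto_rabs a)
  then show ?thesis unfolding errf_def[abs_def] by simp
qed

lemma pt_est:
  fixes y :: "'a::real_normed_vector" and g f :: "'a \<Rightarrow>\<^sub>L real"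
  assumes f: "norm f = 1" and t: "t > 0"
  shows "\<bar>f v - g v\<bar> \<le> (1 - f y) / t + errf y g v t"
proof -
  have key: "f (y + s *\<^sub>R h) \<le> norm (y + s *\<^sub>R h)" for s h
    using blinfun_le_norm[of f] f by simp
  have up: "f h - g h \<le> (1 - f y) / t + \<bar>(norm (y + t *\<^sub>R h) - 1) / t - g h\<bar>" for h
  proof -
    have "f y + t * f h \<le> norm (y + t *\<^sub>R h)" using key[of t h] by (simp add: blinfun.add_right blinfun.scaleR_right)
    then have "f h \<le> (norm (y + t *\<^sub>R h) - f y) / t" using t by (simp add: field_simps)
    also have "\<dots> = (1 - f y) / t + (norm (y + t *\<^sub>R h) - 1) / t" by (simp add: diff_divide_distrib)
    finally show ?thesis by linarith
  qed
  have "f v - g v \<le> (1 - f y) / t + errf y g v t" using up[of v] unfolding errf_def by linarith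
  moreover have "g v - f v \<le> (1 - f y) / t + errf y g v t"
    using up[of "-v"] unfolding errf_def by (simp add: blinfun.minus_right)
  ultimately show ?thesis by linarith
qed

lemma avg_est:
  fixes y :: "'a::real_normed_vector" and g :: "'a \<Rightarrow>\<^sub>L real" and f :: "nat \<Rightarrow> 'a \<Rightarrow>\<^sub>L real"
  assumes f: "\<And>n. norm (f n) = 1" and t: "t > 0" and d: "fin_prob_seq d"
  shows "(\<Sum>n\<in>{n. d n \<noteq> 0}. d n * \<bar>f n v - g v\<bar>) \<le> (1 - (\<Sum>n\<in>{n. d n \<noteq> 0}. d n * f n y)) / t + errf y g v t"
proof -
  let ?F = "{n. d n \<noteq> 0}"
  have d0: "\<forall>n. 0 \<le> d n" "(\<Sum>n\<in>?F. d n) = 1" using d unfolding fin_prob_seq_def by auto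
  have "(\<Sum>n\<in>?F. d n * \<bar>f n v - g v\<bar>) \<le> (\<Sum>n\<in>?F. d n * ((1 - f n y) / t + errf y g v t))"
    by (rule sum_mono, rule mult_left_mono) (use pt_est[OF f t] d0 in auto)
  also have "\<dots> = ((\<Sum>n\<in>?F. d n) - (\<Sum>n\<in>?F. d n * f n y)) / t + (\<Sum>n\<in>?F. d n) * errf y g v t"
    by (simp add: algebra_simps sum.distrib sum_subtractf sum_distrib_left sum_distrib_right sum_divide_distrib[symmetric])
  finally show ?thesis using d0 by simp
qed

lemma avg_conv:
  fixes y :: "'a::real_normed_vector" and g :: "'a \<Rightarrow>\<^sub>L real" and f :: "nat \<Rightarrow> 'a \<Rightarrow>\<^sub>L real"
  assumes smooth: "gateaux_smooth_point y" and yg: "norm y = 1" "norm g = 1" "g y = 1"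
    and f: "\<And>n. norm (f n) = 1" and d: "\<And>l. fin_prob_seq (d l)"
    and lim: "(\<lambda>l. \<Sum>n\<in>{n. d l n \<noteq> 0}. d l n * f n y) \<longlonglongrightarrow> 1"
  shows "(\<lambda>l. \<Sum>n\<in>{n. d l n \<noteq> 0}. d l n * \<bar>f n v - g v\<bar>) \<longlonglongrightarrow> 0"
proof (rule LIMSEQ_I)
  fix r :: real assume r: "r > 0"
  have "\<forall>u>0. eventually (\<lambda>t. errf y g v t < u) (at_right 0)"
    using errf_lim[OF smooth yg, of v] by (simp add: order_tendsto_iff)
  then have "eventually (\<lambda>t. errf y g v t < r/2) (at_right 0)" using r by (meson half_gt_zero)
  then obtain b where b: "b > 0" "\<forall>t>0. t < b \<longrightarrow> errf y g v t < r/2"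
    unfolding eventually_at_right_field by auto
  define t where "t = b/2"
  have t: "t > 0" "errf y g v t < r/2" using b unfolding t_def by auto
  obtain N where N: "\<forall>l\<ge>N. norm ((\<Sum>n\<in>{n. d l n \<noteq> 0}. d l n * f n y) - 1) < r * t / 2"
    using LIMSEQ_D[OF lim, of "r * t / 2"] r t by auto
  have "norm ((\<Sum>n\<in>{n. d l n \<noteq> 0}. d l n * \<bar>f n v - g v\<bar>) - 0) < r" if l: "l \<ge> N" for l
  proof -
    have nn: "0 \<le> (\<Sum>n\<in>{n. d l n \<noteq> 0}. d l n * \<bar>f n v - g v\<bar>)"
      using d[of l] unfolding fin_prob_seq_def by (auto intro!: sum_nonneg)
    have e: "(\<Sum>n\<in>{n. d l n \<noteq> 0}. d l n * \<bar>f n v - g v\<bar>) \<le> (1 - (\<Sum>n\<in>{n. d l n \<noteq> 0}. d l n * f n y)) / t + errf y g v t"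
      by (rule avg_est[OF f t(1) d])
    have "norm ((\<Sum>n\<in>{n. d l n \<noteq> 0}. d l n * f n y) - 1) < r * t / 2" using N l by blast
    then have "1 - (\<Sum>n\<in>{n. d l n \<noteq> 0}. d l n * f n y) < r * t / 2" by (simp only: real_norm_def abs_less_iff) linarith
    then have "(1 - (\<Sum>n\<in>{n. d l n \<noteq> 0}. d l n * f n y)) / t < r / 2"
      using t by (simp add: divide_less_eq)
    then have "(\<Sum>n\<in>{n. d l n \<noteq> 0}. d l n * \<bar>f n v - g v\<bar>) < r" using e t(2) by linarith
    then show ?thesis using nn by simp
  qed
  then show "\<exists>N. \<forall>l\<ge>N. norm ((\<Sum>n\<in>{n. d l n \<noteq> 0}. d l n * \<bar>f n v - g v\<bar>) - 0) < r" by blast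
qed




lemma approx:
  fixes x :: "nat \<Rightarrow> 'a::real_normed_vector" and f :: "nat \<Rightarrow> ('a \<Rightarrow>\<^sub>L real)" and c :: "nat \<Rightarrow> nat \<Rightarrow> real"
  assumes c: "\<And>k. fin_prob_seq (c k)"
    and i: "weak_conv (\<lambda>k. \<Sum>n\<in>{n. c k n \<noteq> 0}. c k n *\<^sub>R x n) y"
    and ii: "(\<lambda>k. \<Sum>n\<in>{n. c k n \<noteq> 0}. c k n * f n y) \<longlonglongrightarrow> 1"
    and e: "\<epsilon> > 0"
  shows "\<exists>dd. fin_prob_seq dd \<and> norm ((\<Sum>n\<in>{n. dd n \<noteq> 0}. dd n *\<^sub>R x n) - y) \<le> \<epsilon>
            \<and> \<bar>(\<Sum>n\<in>{n. dd n \<noteq> 0}. dd n * f n y) - 1\<bar> \<le> \<epsilon>"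
proof -
  define z where "z = (\<lambda>k. \<Sum>n\<in>{n. c k n \<noteq> 0}. c k n *\<^sub>R x n)"
  define a where "a = (\<lambda>k. \<Sum>n\<in>{n. c k n \<noteq> 0}. c k n * f n y)"
  obtain N where N: "\<forall>k\<ge>N. norm (a k - 1) < \<epsilon>" using LIMSEQ_D[OF ii e] unfolding a_def by blast
  obtain m where m: "m \<in> convex hull (z ` {N..})" "dist y m < \<epsilon>"
    using mazur[OF i[folded z_def] e, of N] by blast
  then obtain K u p where up: "\<forall>i\<in>{1::nat..K}. 0 \<le> u i \<and> p i \<in> z ` {N..}" "sum u {1..K} = 1"
      "(\<Sum>i = 1..K. u i *\<^sub>R p i) = m"
    unfolding convex_hull_indexed by blast
  have "\<forall>i\<in>{1..K}. \<exists>k. k \<ge> N \<and> p i = z k" using up(1) by auto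
  then obtain \<kappa> where \<kappa>: "\<forall>i\<in>{1..K}. \<kappa> i \<ge> N \<and> p i = z (\<kappa> i)" by metis
  define dd where "dd = (\<lambda>n. \<Sum>i\<in>{1..K}. u i * c (\<kappa> i) n)"
  have cc: "\<forall>i\<in>{1..K}. fin_prob_seq (c (\<kappa> i))" using c by blast
  have fp: "fin_prob_seq dd" unfolding dd_def
    by (rule combo_prob) (use up(1,2) cc in auto)
  have sx: "(\<Sum>n\<in>{n. dd n \<noteq> 0}. dd n *\<^sub>R x n) = m"
  proof -
    have "(\<Sum>n\<in>{n. dd n \<noteq> 0}. dd n *\<^sub>R x n) = (\<Sum>i\<in>{1..K}. u i *\<^sub>R z (\<kappa> i))"
      unfolding dd_def z_def by (rule combo_sum(1)[OF _ cc]) simp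
    also have "\<dots> = m" using up(3) \<kappa> by (metis (no_types, lifting) sum.cong)
    finally show ?thesis .
  qed
  have sf: "(\<Sum>n\<in>{n. dd n \<noteq> 0}. dd n * f n y) = (\<Sum>i\<in>{1..K}. u i * a (\<kappa> i))"
    using combo_sum(1)[OF _ cc, of u "\<lambda>n. f n y"] unfolding dd_def a_def by simp
  have "\<bar>(\<Sum>i\<in>{1..K}. u i * a (\<kappa> i)) - 1\<bar> = \<bar>\<Sum>i\<in>{1..K}. u i * (a (\<kappa> i) - 1)\<bar>"
    using up(2) by (simp add: algebra_simps sum_subtractf sum_distrib_left)
  also have "\<dots> \<le> (\<Sum>i\<in>{1..K}. \<bar>u i * (a (\<kappa> i) - 1)\<bar>)" by (rule sum_abs)
  also have "\<dots> \<le> (\<Sum>i\<in>{1..K}. u i * \<epsilon>)"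
  proof (rule sum_mono)
    fix i assume i: "i \<in> {1..K}"
    have "\<bar>a (\<kappa> i) - 1\<bar> \<le> \<epsilon>" using N \<kappa> i by (simp add: less_imp_le)
    then show "\<bar>u i * (a (\<kappa> i) - 1)\<bar> \<le> u i * \<epsilon>" using up(1) i by (simp add: abs_mult mult_left_mono)
  qed
  also have "\<dots> = \<epsilon>" using up(2) by (simp add: sum_distrib_right[symmetric])
  finally have "\<bar>(\<Sum>n\<in>{n. dd n \<noteq> 0}. dd n * f n y) - 1\<bar> \<le> \<epsilon>" using sf by simp
  moreover have "norm ((\<Sum>n\<in>{n. dd n \<noteq> 0}. dd n *\<^sub>R x n) - y) \<le> \<epsilon>"
    using sx m(2) by (simp add: dist_norm norm_minus_commute)
  ultimately show ?thesis using fp by blast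
qed




lemma wot_part:
  fixes x :: "nat \<Rightarrow> 'a::real_normed_vector" and f :: "nat \<Rightarrow> ('a \<Rightarrow>\<^sub>L real)"
    and g :: "'a \<Rightarrow>\<^sub>L real" and c :: "nat \<Rightarrow> nat \<Rightarrow> real"
  assumes xf: "\<And>n. norm (x n) = 1 \<and> norm (f n) = 1 \<and> f n (x n) = 1"
    and yg: "norm y = 1" "norm g = 1" "g y = 1"
    and smooth: "gateaux_smooth_point y"
    and c: "\<And>k. fin_prob_seq (c k)"
    and i: "weak_conv (\<lambda>k. \<Sum>n\<in>{n. c k n \<noteq> 0}. c k n *\<^sub>R x n) y"
    and ii: "(\<lambda>k. \<Sum>n\<in>{n. c k n \<noteq> 0}. c k n * f n y) \<longlonglongrightarrow> 1"
  shows "wot_conv (\<lambda>k. \<Sum>n\<in>{n. c k n \<noteq> 0}. c k n *\<^sub>R rank_one (f n) (x n)) (rank_one g y)"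
  unfolding wot_conv_def
proof (intro allI)
  fix v and \<phi> :: "'a \<Rightarrow>\<^sub>L real"
  define A where "A = (\<lambda>k. \<Sum>n\<in>{n. c k n \<noteq> 0}. c k n * \<bar>f n v - g v\<bar>)"
  define B where "B = (\<lambda>k. \<phi> (\<Sum>n\<in>{n. c k n \<noteq> 0}. c k n *\<^sub>R x n))"
  have fn: "\<And>n. norm (f n) = 1" using xf by blast
  have A: "A \<longlonglongrightarrow> 0" unfolding A_def by (rule avg_conv[OF smooth yg fn c ii])
  have B: "B \<longlonglongrightarrow> \<phi> y" unfolding B_def using i unfolding weak_conv_def by blast
  have lim: "(\<lambda>k. norm \<phi> * A k + \<bar>g v\<bar> * \<bar>B k - \<phi> y\<bar>) \<longlonglongrightarrow> norm \<phi> * 0 + \<bar>g v\<bar> * \<bar>\<phi> y - \<phi> y\<bar>"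
    by (intro tendsto_intros A B)
  have bound: "norm (\<phi> ((\<Sum>n\<in>{n. c k n \<noteq> 0}. c k n *\<^sub>R rank_one (f n) (x n)) v) - \<phi> (rank_one g y v))
      \<le> norm \<phi> * A k + \<bar>g v\<bar> * \<bar>B k - \<phi> y\<bar>" for k
  proof -
    let ?F = "{n. c k n \<noteq> 0}"
    have c0: "\<forall>n. 0 \<le> c k n" using c[of k] unfolding fin_prob_seq_def by auto
    have lhs: "\<phi> ((\<Sum>n\<in>?F. c k n *\<^sub>R rank_one (f n) (x n)) v) = (\<Sum>n\<in>?F. c k n * f n v * \<phi> (x n))"
      by (simp add: apply_sum_rank_one blinfun.sum_right blinfun.scaleR_right)
    have Bk: "B k = (\<Sum>n\<in>?F. c k n * \<phi> (x n))"
      unfolding B_def by (simp add: blinfun.sum_right blinfun.scaleR_right)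
    have r1: "\<phi> (rank_one g y v) = g v * \<phi> y" by (simp add: rank_one_def blinfun.scaleR_right)
    have id: "(\<Sum>n\<in>?F. c k n * f n v * \<phi> (x n)) - g v * \<phi> y
        = (\<Sum>n\<in>?F. c k n * (f n v - g v) * \<phi> (x n)) + g v * (B k - \<phi> y)"
      unfolding Bk by (simp add: algebra_simps sum_subtractf sum_distrib_left sum.distrib)
    have "\<bar>\<Sum>n\<in>?F. c k n * (f n v - g v) * \<phi> (x n)\<bar> \<le> (\<Sum>n\<in>?F. \<bar>c k n * (f n v - g v) * \<phi> (x n)\<bar>)"
      by (rule sum_abs)
    also have "\<dots> \<le> (\<Sum>n\<in>?F. norm \<phi> * (c k n * \<bar>f n v - g v\<bar>))"
    proof (rule sum_mono)
      fix n
      have "\<bar>\<phi> (x n)\<bar> \<le> norm \<phi>" using norm_blinfun[of \<phi> "x n"] xf[of n] by simp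
      then show "\<bar>c k n * (f n v - g v) * \<phi> (x n)\<bar> \<le> norm \<phi> * (c k n * \<bar>f n v - g v\<bar>)"
      proof -
        have "(c k n * \<bar>f n v - g v\<bar>) * \<bar>\<phi> (x n)\<bar> \<le> (c k n * \<bar>f n v - g v\<bar>) * norm \<phi>"
          using c0 \<open>\<bar>\<phi> (x n)\<bar> \<le> norm \<phi>\<close> by (intro mult_left_mono) auto
        then show ?thesis using c0 by (simp add: abs_mult mult_ac)
      qed
    qed
    also have "\<dots> = norm \<phi> * A k" unfolding A_def by (simp add: sum_distrib_left)
    finally have t1: "\<bar>\<Sum>n\<in>?F. c k n * (f n v - g v) * \<phi> (x n)\<bar> \<le> norm \<phi> * A k" .
    have "norm (\<phi> ((\<Sum>n\<in>?F. c k n *\<^sub>R rank_one (f n) (x n)) v) - \<phi> (rank_one g y v))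
        = \<bar>(\<Sum>n\<in>?F. c k n * (f n v - g v) * \<phi> (x n)) + g v * (B k - \<phi> y)\<bar>"
      using lhs r1 id by simp
    also have "\<dots> \<le> norm \<phi> * A k + \<bar>g v\<bar> * \<bar>B k - \<phi> y\<bar>"
      using t1 abs_triangle_ineq[of "(\<Sum>n\<in>?F. c k n * (f n v - g v) * \<phi> (x n))" "g v * (B k - \<phi> y)"]
      by (simp add: abs_mult)
    finally show ?thesis .
  qed
  have "(\<lambda>k. \<phi> ((\<Sum>n\<in>{n. c k n \<noteq> 0}. c k n *\<^sub>R rank_one (f n) (x n)) v) - \<phi> (rank_one g y v)) \<longlonglongrightarrow> 0"
    by (rule Lim_null_comparison[OF _ lim[simplified]]) (use bound in auto)
  then show "(\<lambda>k. \<phi> ((\<Sum>n\<in>{n. c k n \<noteq> 0}. c k n *\<^sub>R rank_one (f n) (x n)) v)) \<longlonglongrightarrow> \<phi> (rank_one g y v)"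
    by (rule LIM_zero_cancel)
qed




lemma sot_part:
  fixes x :: "nat \<Rightarrow> 'a::real_normed_vector" and f :: "nat \<Rightarrow> ('a \<Rightarrow>\<^sub>L real)"
    and g :: "'a \<Rightarrow>\<^sub>L real" and d :: "nat \<Rightarrow> nat \<Rightarrow> real"
  assumes xf: "\<And>n. norm (x n) = 1 \<and> norm (f n) = 1 \<and> f n (x n) = 1"
    and yg: "norm y = 1" "norm g = 1" "g y = 1"
    and smooth: "gateaux_smooth_point y"
    and d: "\<And>k. fin_prob_seq (d k)"
    and i: "(\<lambda>k. \<Sum>n\<in>{n. d k n \<noteq> 0}. d k n *\<^sub>R x n) \<longlonglongrightarrow> y"
    and ii: "(\<lambda>k. \<Sum>n\<in>{n. d k n \<noteq> 0}. d k n * f n y) \<longlonglongrightarrow> 1"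
  shows "sot_conv (\<lambda>k. \<Sum>n\<in>{n. d k n \<noteq> 0}. d k n *\<^sub>R rank_one (f n) (x n)) (rank_one g y)"
  unfolding sot_conv_def
proof (intro allI)
  fix v
  define A where "A = (\<lambda>k. \<Sum>n\<in>{n. d k n \<noteq> 0}. d k n * \<bar>f n v - g v\<bar>)"
  define B where "B = (\<lambda>k. \<Sum>n\<in>{n. d k n \<noteq> 0}. d k n *\<^sub>R x n)"
  have fn: "\<And>n. norm (f n) = 1" using xf by blast
  have A: "A \<longlonglongrightarrow> 0" unfolding A_def by (rule avg_conv[OF smooth yg fn d ii])
  have B: "(\<lambda>k. norm (B k - y)) \<longlonglongrightarrow> 0"
    using tendsto_norm[OF LIM_zero[OF i]] unfolding B_def by simp
  have lim: "(\<lambda>k. A k + \<bar>g v\<bar> * norm (B k - y)) \<longlonglongrightarrow> 0 + \<bar>g v\<bar> * 0"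
    by (intro tendsto_intros A B)
  have bound: "norm ((\<Sum>n\<in>{n. d k n \<noteq> 0}. d k n *\<^sub>R rank_one (f n) (x n)) v - rank_one g y v)
      \<le> A k + \<bar>g v\<bar> * norm (B k - y)" for k
  proof -
    let ?F = "{n. d k n \<noteq> 0}"
    have c0: "\<forall>n. 0 \<le> d k n" using d[of k] unfolding fin_prob_seq_def by auto
    have id: "(\<Sum>n\<in>?F. d k n *\<^sub>R rank_one (f n) (x n)) v - rank_one g y v
        = (\<Sum>n\<in>?F. (d k n * (f n v - g v)) *\<^sub>R x n) + g v *\<^sub>R (B k - y)"
      unfolding B_def apply_sum_rank_one
      by (simp add: rank_one_def algebra_simps sum_subtractf scaleR_sum_right sum.distrib)
    have "norm (\<Sum>n\<in>?F. (d k n * (f n v - g v)) *\<^sub>R x n) \<le> (\<Sum>n\<in>?F. norm ((d k n * (f n v - g v)) *\<^sub>R x n))"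
      by (rule norm_sum)
    also have "\<dots> = A k" unfolding A_def using c0 xf by (simp add: abs_mult)
    finally have t1: "norm (\<Sum>n\<in>?F. (d k n * (f n v - g v)) *\<^sub>R x n) \<le> A k" .
    show ?thesis unfolding id
      using t1 norm_triangle_ineq[of "(\<Sum>n\<in>?F. (d k n * (f n v - g v)) *\<^sub>R x n)" "g v *\<^sub>R (B k - y)"]
      by simp
  qed
  have "(\<lambda>k. (\<Sum>n\<in>{n. d k n \<noteq> 0}. d k n *\<^sub>R rank_one (f n) (x n)) v - rank_one g y v) \<longlonglongrightarrow> 0"
    by (rule Lim_null_comparison[OF _ lim[simplified]]) (use bound in auto)
  then show "(\<lambda>k. (\<Sum>n\<in>{n. d k n \<noteq> 0}. d k n *\<^sub>R rank_one (f n) (x n)) v) \<longlonglongrightarrow> rank_one g y v"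
    by (rule LIM_zero_cancel)
qed

lemma flinn_part:
  fixes x :: "nat \<Rightarrow> 'a::real_normed_vector" and f :: "nat \<Rightarrow> ('a \<Rightarrow>\<^sub>L real)"
    and g :: "'a \<Rightarrow>\<^sub>L real" and d :: "nat \<Rightarrow> nat \<Rightarrow> real"
  assumes yg: "norm y = 1" "norm g = 1" "g y = 1"
    and xf: "\<And>n. norm (x n) = 1 \<and> norm (f n) = 1 \<and> f n (x n) = 1"
    and d: "\<And>k. fin_prob_seq (d k)"
    and sot: "sot_conv (\<lambda>k. \<Sum>n\<in>{n. d k n \<noteq> 0}. d k n *\<^sub>R rank_one (f n) (x n)) (rank_one g y)"
    and fl: "\<forall>n. flinn_pair (x n) (f n)"
  shows "flinn_pair y g"
proof -
  let ?T = "id_blinfun - rank_one g y"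
  have Tapp: "?T v = v - g v *\<^sub>R y" for v by (simp add: rank_one_def minus_blinfun.rep_eq)
  have le1: "norm ?T \<le> 1"
  proof (rule norm_blinfun_bound)
    fix v
    have each: "norm (v - f n v *\<^sub>R x n) \<le> norm v" for n
    proof -
      have "norm ((id_blinfun - rank_one (f n) (x n)) v) \<le> norm (id_blinfun - rank_one (f n) (x n)) * norm v"
        by (rule norm_blinfun)
      then show ?thesis using fl unfolding flinn_pair_def by (simp add: rank_one_def minus_blinfun.rep_eq)
    qed
    have "norm (v - (\<Sum>n\<in>{n. d k n \<noteq> 0}. d k n *\<^sub>R rank_one (f n) (x n)) v) \<le> norm v" for k
    proof -
      let ?F = "{n. d k n \<noteq> 0}"
      have c0: "\<forall>n. 0 \<le> d k n" "(\<Sum>n\<in>?F. d k n) = 1" using d[of k] unfolding fin_prob_seq_def by auto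
      have "v = (\<Sum>n\<in>?F. d k n) *\<^sub>R v" using c0 by simp
      then have "v - (\<Sum>n\<in>?F. d k n *\<^sub>R rank_one (f n) (x n)) v = (\<Sum>n\<in>?F. d k n *\<^sub>R (v - f n v *\<^sub>R x n))"
        unfolding apply_sum_rank_one
        by (simp add: scaleR_sum_left algebra_simps sum_subtractf)
      also have "norm \<dots> \<le> (\<Sum>n\<in>?F. norm (d k n *\<^sub>R (v - f n v *\<^sub>R x n)))" by (rule norm_sum)
      also have "\<dots> \<le> (\<Sum>n\<in>?F. d k n * norm v)"
        by (rule sum_mono) (use c0 each in \<open>auto intro: mult_left_mono\<close>)
      also have "\<dots> = norm v" using c0 by (simp add: sum_distrib_right[symmetric])
      finally show ?thesis .
    qed
    moreover have "(\<lambda>k. norm (v - (\<Sum>n\<in>{n. d k n \<noteq> 0}. d k n *\<^sub>R rank_one (f n) (x n)) v)) \<longlonglongrightarrow> norm (v - rank_one g y v)"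
      using sot unfolding sot_conv_def by (intro tendsto_norm tendsto_diff tendsto_const) auto
    ultimately have "norm (v - rank_one g y v) \<le> norm v"
      by (intro LIMSEQ_le_const2) auto
    then show "norm (?T v) \<le> 1 * norm v" by (simp add: minus_blinfun.rep_eq)
  qed auto
  have ge1: "1 \<le> norm ?T"
  proof (cases "\<forall>v. v - g v *\<^sub>R y = 0")
    case True
    have "(id_blinfun - rank_one (f 0) (x 0)) = 0"
    proof (rule blinfun_eqI)
      fix v
      have v: "v = g v *\<^sub>R y" using True by (metis eq_iff_diff_eq_0)
      have x0: "x 0 = g (x 0) *\<^sub>R y" using True by (metis eq_iff_diff_eq_0)
      have f1: "f 0 (x 0) = 1" using xf by blast
      have "f 0 (x 0) = g (x 0) * f 0 y" by (subst x0) (simp add: blinfun.scaleR_right)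
      then have gx: "g (x 0) * f 0 y = 1" using f1 by simp
      have "f 0 v *\<^sub>R x 0 = (g v * f 0 y * g (x 0)) *\<^sub>R y"
        by (subst x0, subst v) (simp add: blinfun.scaleR_right)
      also have "\<dots> = g v *\<^sub>R y" using gx by (simp add: mult.assoc mult.commute[of "f 0 y"])
      finally have "f 0 v *\<^sub>R x 0 = v" using v by simp
      then show "blinfun_apply (id_blinfun - rank_one (f 0) (x 0)) v = blinfun_apply 0 v"
        by (simp add: rank_one_def minus_blinfun.rep_eq)
    qed
    moreover have "norm (id_blinfun - rank_one (f 0) (x 0)) = 1" using fl unfolding flinn_pair_def by blast
    ultimately show ?thesis by simp
  next
    case False
    then obtain w where w: "w - g w *\<^sub>R y \<noteq> 0" by blast
    define u where "u = w - g w *\<^sub>R y"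
    have gu: "g u = 0" unfolding u_def using yg(3) by (simp add: blinfun.diff_right blinfun.scaleR_right)
    have "?T u = u" using Tapp[of u] gu by simp
    then have "norm u \<le> norm ?T * norm u" using norm_blinfun[of ?T u] by simp
    moreover have "norm u > 0" using w unfolding u_def by simp
    ultimately show ?thesis by simp
  qed
  show ?thesis unfolding flinn_pair_def using yg le1 ge1 by simp
qed




theorem lemma2p3:
  fixes x :: "nat \<Rightarrow> 'a::banach" and f :: "nat \<Rightarrow> ('a \<Rightarrow>\<^sub>L real)"
    and y :: 'a and g :: "'a \<Rightarrow>\<^sub>L real" and c :: "nat \<Rightarrow> nat \<Rightarrow> real"
  assumes xf: "\<And>n. norm (x n) = 1 \<and> norm (f n) = 1 \<and> f n (x n) = 1"
    and yg: "norm y = 1" "norm g = 1" "g y = 1"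
    and smooth: "gateaux_smooth_point y"
    and c: "\<And>k. fin_prob_seq (c k)"
    and i: "weak_conv (\<lambda>k. \<Sum>n\<in>{n. c k n \<noteq> 0}. c k n *\<^sub>R x n) y"
    and ii: "(\<lambda>k. \<Sum>n\<in>{n. c k n \<noteq> 0}. c k n * f n y) \<longlonglongrightarrow> 1"
  shows "wot_conv (\<lambda>k. \<Sum>n\<in>{n. c k n \<noteq> 0}. c k n *\<^sub>R rank_one (f n) (x n)) (rank_one g y)
    \<and> (\<exists>d :: nat \<Rightarrow> nat \<Rightarrow> real. (\<forall>l. fin_prob_seq (d l)) \<and>
          sot_conv (\<lambda>l. \<Sum>n\<in>{n. d l n \<noteq> 0}. d l n *\<^sub>R rank_one (f n) (x n)) (rank_one g y))
    \<and> ((\<forall>n. flinn_pair (x n) (f n)) \<longrightarrow> flinn_pair y g)"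
proof -
  have W: "wot_conv (\<lambda>k. \<Sum>n\<in>{n. c k n \<noteq> 0}. c k n *\<^sub>R rank_one (f n) (x n)) (rank_one g y)"
    by (rule wot_part[OF xf yg smooth c i ii])
  have "\<forall>l. \<exists>dd. fin_prob_seq dd \<and> norm ((\<Sum>n\<in>{n. dd n \<noteq> 0}. dd n *\<^sub>R x n) - y) \<le> inverse (real (Suc l))
            \<and> \<bar>(\<Sum>n\<in>{n. dd n \<noteq> 0}. dd n * f n y) - 1\<bar> \<le> inverse (real (Suc l))"
    using approx[OF c i ii] by simp
  then obtain D where D0: "\<forall>l. fin_prob_seq (D l) \<and> norm ((\<Sum>n\<in>{n. D l n \<noteq> 0}. D l n *\<^sub>R x n) - y) \<le> inverse (real (Suc l))
            \<and> \<bar>(\<Sum>n\<in>{n. D l n \<noteq> 0}. D l n * f n y) - 1\<bar> \<le> inverse (real (Suc l))"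
    by (rule choice[THEN exE])
  have D: "\<And>l. fin_prob_seq (D l)"
    "\<And>l. norm ((\<Sum>n\<in>{n. D l n \<noteq> 0}. D l n *\<^sub>R x n) - y) \<le> inverse (real (Suc l))"
    "\<And>l. \<bar>(\<Sum>n\<in>{n. D l n \<noteq> 0}. D l n * f n y) - 1\<bar> \<le> inverse (real (Suc l))"
    using D0 by auto
  have L1: "(\<lambda>l. \<Sum>n\<in>{n. D l n \<noteq> 0}. D l n *\<^sub>R x n) \<longlonglongrightarrow> y"
    by (rule LIM_zero_cancel, rule Lim_null_comparison[OF _ LIMSEQ_inverse_real_of_nat]) (use D(2) in auto)
  have L2: "(\<lambda>l. \<Sum>n\<in>{n. D l n \<noteq> 0}. D l n * f n y) \<longlonglongrightarrow> 1"
    by (rule LIM_zero_cancel, rule Lim_null_comparison[OF _ LIMSEQ_inverse_real_of_nat]) (use D(3) in auto)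
  have S: "sot_conv (\<lambda>l. \<Sum>n\<in>{n. D l n \<noteq> 0}. D l n *\<^sub>R rank_one (f n) (x n)) (rank_one g y)"
    by (rule sot_part[OF xf yg smooth D(1) L1 L2])
  have F: "(\<forall>n. flinn_pair (x n) (f n)) \<longrightarrow> flinn_pair y g"
    using flinn_part[OF yg xf D(1) S] by blast
  have E: "\<exists>d :: nat \<Rightarrow> nat \<Rightarrow> real. (\<forall>l. fin_prob_seq (d l)) \<and>
          sot_conv (\<lambda>l. \<Sum>n\<in>{n. d l n \<noteq> 0}. d l n *\<^sub>R rank_one (f n) (x n)) (rank_one g y)"
    using S D(1) by (intro exI[of _ D]) simp
  show ?thesis using W E F by (intro conjI)
qed


end
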